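(* For $\varepsilon\ge0$ let $\psi_\varepsilon(a,b)=a+b-\sqrt{a^2+b^2+2\varepsilon^2}$, $\Psi_\varepsilon(y,z)=(\psi_\varepsilon(y_1,z_1),\dots,\psi_\varepsilon(y_p,z_p))$ for $y,z\in\mathbb R^p$, and $\Theta(\varepsilon)=\{(y,z)\in\mathbb R^p\times\mathbb R^p:\Psi_\varepsilon(y,z)=0\}$. Then $\lim_{\varepsilon\searrow0}\Theta(\varepsilon)=\Theta(0)$ in the sense of Painlevé–Kuratowski set convergence, where $\Theta(0)=\{(y,z):0\le y\perp z\ge0\}$.
   Context: Painlevé–Kuratowski convergence means $\limsup_{\varepsilon\searrow0}\Theta(\varepsilon)\subset\Theta(0)\subset\liminf_{\varepsilon\searrow0}\Theta(\varepsilon)$ (outer and inner limits of sets). *)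

theory Defs
  imports "HOL-Analysis.Analysis"
begin

definition psi :: "real \<Rightarrow> real \<Rightarrow> real \<Rightarrow> real" where
  "psi eps a b = a + b - sqrt (a\<^sup>2 + b\<^sup>2 + 2 * eps\<^sup>2)"

definition Psi :: "real \<Rightarrow> real^'p \<Rightarrow> real^'p \<Rightarrow> real^'p" where
  "Psi eps y z = (\<chi> i. psi eps (y $ i) (z $ i))"

definition Theta :: "real \<Rightarrow> ((real^'p) \<times> (real^'p)) set" where
  "Theta eps = {(y, z). Psi eps y z = 0}"

definition outer_limit_right0 :: "(real \<Rightarrow> 'a::metric_space set) \<Rightarrow> 'a set" where
  "outer_limit_right0 S = {x. \<exists>e xs. (\<forall>k. e k > 0) \<and> e \<longlonglongrightarrow> 0 \<and>
       (\<forall>k. xs k \<in> S (e k)) \<and> xs \<longlonglongrightarrow> x}"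

definition inner_limit_right0 :: "(real \<Rightarrow> 'a::metric_space set) \<Rightarrow> 'a set" where
  "inner_limit_right0 S = {x. \<forall>e. (\<forall>k. e k > 0) \<and> e \<longlonglongrightarrow> 0 \<longrightarrow>
       (\<exists>xs. (\<forall>\<^sub>F k in sequentially. xs k \<in> S (e k)) \<and> xs \<longlonglongrightarrow> x)}"

end

theory Submission
  imports Defs
begin

lemma psi0_iff: "psi 0 a b = 0 \<longleftrightarrow> a \<ge> 0 \<and> b \<ge> 0 \<and> a * b = 0"
proof
  assume h: "psi 0 a b = 0"
  hence s: "sqrt (a\<^sup>2 + b\<^sup>2) = a + b" by (simp add: psi_def)
  hence ab: "a + b \<ge> 0" by (metis real_sqrt_ge_zero add_nonneg_nonneg zero_le_power2)
  have "a\<^sup>2 + b\<^sup>2 = (a + b)\<^sup>2" using s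
    by (metis add_nonneg_nonneg real_sqrt_pow2 zero_le_power2)
  hence "a * b = 0" by (simp add: power2_eq_square algebra_simps)
  thus "a \<ge> 0 \<and> b \<ge> 0 \<and> a * b = 0" using ab by auto
next
  assume "a \<ge> 0 \<and> b \<ge> 0 \<and> a * b = 0"
  thus "psi 0 a b = 0" by (auto simp: psi_def)
qed

definition aa :: "real \<Rightarrow> real \<Rightarrow> real" where
  "aa e d = (d + sqrt (d\<^sup>2 + 4 * e\<^sup>2)) / 2"
definition bb :: "real \<Rightarrow> real \<Rightarrow> real" where
  "bb e d = (sqrt (d\<^sup>2 + 4 * e\<^sup>2) - d) / 2"

lemma psi_aa_bb: "psi e (aa e d) (bb e d) = 0"
proof -
  define s where "s = sqrt (d\<^sup>2 + 4 * e\<^sup>2)"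
  have s0: "s \<ge> 0" unfolding s_def by simp
  have s2: "s\<^sup>2 = d\<^sup>2 + 4 * e\<^sup>2" unfolding s_def by simp
  have sum: "aa e d + bb e d = s" unfolding aa_def bb_def s_def by (simp add: field_simps)
  have "(aa e d)\<^sup>2 + (bb e d)\<^sup>2 + 2 * e\<^sup>2 = s\<^sup>2"
    unfolding aa_def bb_def s_def[symmetric] using s2
    by (simp add: power2_eq_square field_simps)
  hence "sqrt ((aa e d)\<^sup>2 + (bb e d)\<^sup>2 + 2 * e\<^sup>2) = s" using s0 by simp
  thus ?thesis using sum by (simp add: psi_def)
qed

lemma aa_lim: "e \<longlonglongrightarrow> 0 \<Longrightarrow> (\<lambda>k. aa (e k) d) \<longlonglongrightarrow> (d + \<bar>d\<bar>) / 2"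
proof -
  assume "e \<longlonglongrightarrow> 0"
  hence "(\<lambda>k. aa (e k) d) \<longlonglongrightarrow> (d + sqrt (d\<^sup>2 + 4 * 0\<^sup>2)) / 2"
    unfolding aa_def by (intro tendsto_intros) simp_all
  thus ?thesis by simp
qed

lemma bb_lim: "e \<longlonglongrightarrow> 0 \<Longrightarrow> (\<lambda>k. bb (e k) d) \<longlonglongrightarrow> (\<bar>d\<bar> - d) / 2"
proof -
  assume "e \<longlonglongrightarrow> 0"
  hence "(\<lambda>k. bb (e k) d) \<longlonglongrightarrow> (sqrt (d\<^sup>2 + 4 * 0\<^sup>2) - d) / 2"
    unfolding bb_def by (intro tendsto_intros) simp_all
  thus ?thesis by simp
qed

lemma Theta0_char:
  "(Theta 0 :: ((real^'p) \<times> (real^'p)) set) =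
           {(y, z). (\<forall>i. 0 \<le> y $ i) \<and> (\<forall>i. 0 \<le> z $ i) \<and> y \<bullet> z = 0}"
proof -
  have "Psi 0 y z = 0 \<longleftrightarrow> (\<forall>i. 0 \<le> y $ i) \<and> (\<forall>i. 0 \<le> z $ i) \<and> y \<bullet> z = 0"
    for y z :: "real^'p"
  proof -
    have "Psi 0 y z = 0 \<longleftrightarrow> (\<forall>i. y $ i \<ge> 0 \<and> z $ i \<ge> 0 \<and> y $ i * z $ i = 0)"
      by (simp add: Psi_def vec_eq_iff psi0_iff)
    also have "\<dots> \<longleftrightarrow> (\<forall>i. 0 \<le> y $ i) \<and> (\<forall>i. 0 \<le> z $ i) \<and> y \<bullet> z = 0"
    proof (cases "(\<forall>i. 0 \<le> y $ i) \<and> (\<forall>i. 0 \<le> z $ i)")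
      case True
      have "y \<bullet> z = (\<Sum>i\<in>UNIV. y $ i * z $ i)" by (simp add: inner_vec_def)
      moreover have "(\<Sum>i\<in>UNIV. y $ i * z $ i) = 0 \<longleftrightarrow> (\<forall>i. y $ i * z $ i = 0)"
        using True by (subst sum_nonneg_eq_0_iff) auto
      ultimately show ?thesis using True by auto
    qed auto
    finally show ?thesis .
  qed
  thus ?thesis by (auto simp: Theta_def)
qed

theorem lemma4p2:
  shows "outer_limit_right0 (Theta :: real \<Rightarrow> ((real^'p) \<times> (real^'p)) set) \<subseteq> Theta 0
       \<and> Theta 0 \<subseteq> inner_limit_right0 (Theta :: real \<Rightarrow> ((real^'p) \<times> (real^'p)) set)
       \<and> (Theta 0 :: ((real^'p) \<times> (real^'p)) set) =
           {(y, z). (\<forall>i. 0 \<le> y $ i) \<and> (\<forall>i. 0 \<le> z $ i) \<and> y \<bullet> z = 0}"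
proof (intro conjI)
  show "outer_limit_right0 (Theta :: real \<Rightarrow> ((real^'p) \<times> (real^'p)) set) \<subseteq> Theta 0"
  proof
    fix x :: "(real^'p) \<times> (real^'p)"
    assume "x \<in> outer_limit_right0 Theta"
    then obtain e xs where e: "e \<longlonglongrightarrow> 0" and xsT: "\<forall>k. xs k \<in> Theta (e k)"
      and xl: "xs \<longlonglongrightarrow> x" unfolding outer_limit_right0_def by blast
    have "psi 0 (fst x $ i) (snd x $ i) = 0" for i
    proof -
      have "(\<lambda>k. psi (e k) (fst (xs k) $ i) (snd (xs k) $ i)) \<longlonglongrightarrow> psi 0 (fst x $ i) (snd x $ i)"
        unfolding psi_def
        by (intro tendsto_intros e xl tendsto_vec_nth tendsto_fst tendsto_snd)
      moreover have "\<And>k. psi (e k) (fst (xs k) $ i) (snd (xs k) $ i) = 0"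
      proof -
        fix k
        have "Psi (e k) (fst (xs k)) (snd (xs k)) = 0" using xsT[rule_format, of k]
          by (cases "xs k") (auto simp: Theta_def)
        thus "psi (e k) (fst (xs k) $ i) (snd (xs k) $ i) = 0"
          by (simp add: Psi_def vec_eq_iff)
      qed
      ultimately have "(\<lambda>k. 0::real) \<longlonglongrightarrow> psi 0 (fst x $ i) (snd x $ i)" by simp
      thus ?thesis by (metis LIMSEQ_const_iff)
    qed
    thus "x \<in> Theta 0"
      by (cases x) (auto simp: Theta_def Psi_def vec_eq_iff)
  qed
next
  show "Theta 0 \<subseteq> inner_limit_right0 (Theta :: real \<Rightarrow> ((real^'p) \<times> (real^'p)) set)"
  proof
    fix x :: "(real^'p) \<times> (real^'p)"
    assume xT: "x \<in> Theta 0"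
    obtain y z where x: "x = (y, z)" by (cases x)
    have c: "y $ i \<ge> 0 \<and> z $ i \<ge> 0 \<and> y $ i * z $ i = 0" for i
      using xT unfolding x by (simp add: Theta_def Psi_def vec_eq_iff psi0_iff)
    show "x \<in> inner_limit_right0 Theta"
      unfolding inner_limit_right0_def
    proof (intro CollectI allI impI)
      fix e :: "nat \<Rightarrow> real"
      assume "(\<forall>k. 0 < e k) \<and> e \<longlonglongrightarrow> 0"
      hence e: "e \<longlonglongrightarrow> 0" by blast
      define xs where "xs = (\<lambda>k. ((\<chi> i. aa (e k) (y $ i - z $ i)) :: real^'p,
                                   (\<chi> i. bb (e k) (y $ i - z $ i)) :: real^'p))"
      have "\<forall>\<^sub>F k in sequentially. xs k \<in> Theta (e k)"
        by (intro always_eventually allI)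
          (simp add: xs_def Theta_def Psi_def vec_eq_iff psi_aa_bb)
      moreover have "xs \<longlonglongrightarrow> x"
        unfolding xs_def x
      proof (intro tendsto_Pair vec_tendstoI)
        fix i
        have h1: "((y $ i - z $ i) + \<bar>y $ i - z $ i\<bar>) / 2 = y $ i" using c[of i]
          by (cases "y $ i = 0") auto
        show "(\<lambda>k. (\<chi> i. aa (e k) (y $ i - z $ i)) $ i) \<longlonglongrightarrow> y $ i"
          using aa_lim[OF e, of "y $ i - z $ i"] by (simp only: h1 vec_lambda_beta)
        have h2: "(\<bar>y $ i - z $ i\<bar> - (y $ i - z $ i)) / 2 = z $ i" using c[of i]
          by (cases "y $ i = 0") auto
        show "(\<lambda>k. (\<chi> i. bb (e k) (y $ i - z $ i)) $ i) \<longlonglongrightarrow> z $ i"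
          using bb_lim[OF e, of "y $ i - z $ i"] by (simp only: h2 vec_lambda_beta)
      qed
      ultimately show "\<exists>xs. (\<forall>\<^sub>F k in sequentially. xs k \<in> Theta (e k)) \<and> xs \<longlonglongrightarrow> x"
        by blast
    qed
  qed
next
  show "(Theta 0 :: ((real^'p) \<times> (real^'p)) set) =
           {(y, z). (\<forall>i. 0 \<le> y $ i) \<and> (\<forall>i. 0 \<le> z $ i) \<and> y \<bullet> z = 0}"
    by (rule Theta0_char)
qed

end
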